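(* Let $n\ge 1$, $m$, $\hbar\neq 0$ be constants and let $\omega^0,\omega^1\in(-\pi/2,\pi/2]$. Let $a_\ast$ be a nowhere vanishing, differentiable complex-valued function of $t\in\mathbb{R}$ such that $\theta:=\arg a_\ast(t)$ is a constant independent of $t$. Let $b_0\in\mathbb{C}\setminus\{0\}$ and define $w_\ast(t):=b_0\big(a_\ast(0)/a_\ast(t)\big)^{n/2}$. Put $C_0:=2me^{i\omega^0}/\hbar$ and assume $C_0\in\mathbb{R}$. Let $V_0,V_0'$ be functions on $\mathbb{C}$ with $\mathrm{Im}\{\bar z\,V_0'(z)\}=0$ for all $z\in\mathbb{C}$. Let $u_\ast=u_\ast(t,x)$, $(t,x)\in\mathbb{R}\times\mathbb{R}^n$, be a complex-valued solution (for a fixed choice of sign $\pm$) of $$\pm i\,C_0\,\partial_t u_\ast+\frac{e^{2i\omega^0}}{e^{2i(\theta+\omega^1)}}\left(\frac{1}{|a_\ast|^2}\Delta_x u_\ast-\frac{1}{w_\ast}V_0'(u_\ast w_\ast)\right)=0,$$ where $\Delta_x=\sum_{j=1}^n\partial^2/(\partial x^j)^2$, which is sufficiently smooth and decays at spatial infinity so that all integrals below are finite and integrals over $\mathbb{R}^n$ of spatial divergences vanish. (1) (Charge estimate.) For every $t$, $$\pm\int_{\mathbb{R}^n}e_C^0(t,x)\,dx+\int_0^t\int_{\mathbb{R}^n}e_C^{n+1}(s,x)\,dx\,ds=\pm\int_{\mathbb{R}^n}e_C^0(0,x)\,dx,$$ where $e_C^0:=C_0|u_\ast|^2$ and $$e_C^{n+1}:=2\,\mathrm{Im}\Big(\frac{e^{2i(\theta+\omega^1)}}{e^{2i\omega^0}}\Big)\left(\frac{1}{|a_\ast|^2}\sum_{j=1}^n|\partial_{x^j}u_\ast|^2+\frac{1}{|w_\ast|^2}\overline{u_\ast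 w_\ast}\,V_0'(u_\ast w_\ast)\right).$$ (2) (Energy estimate.) Assume in addition that $\partial_t V_0(\psi)=\mathrm{Re}\,\big(\partial_t\overline{\psi}\,V_0'(\psi)\big)$ for every function $\psi=\psi(t,x)$. Then for every $t$, $$\int_{\mathbb{R}^n}e_E^0(t,x)\,dx+\int_0^t\int_{\mathbb{R}^n}e_E^{n+1}(s,x)\,dx\,ds=\int_{\mathbb{R}^n}e_E^0(0,x)\,dx,$$ where $$e_E^0:=\sum_{j=1}^n|\partial_{x^j}u_\ast|^2+\frac{2|a_\ast|^2}{|w_\ast|^2}V_0(u_\ast w_\ast)$$ and $$e_E^{n+1}:=\pm2C_0\,\mathrm{Im}\Big(\frac{e^{2i(\theta+\omega^1)}}{e^{2i\omega^0}}\Big)|a_\ast|^2|\partial_t u_\ast|^2+\frac{n}{2|w_\ast|^2}\big(\partial_t|a_\ast|^2\big)\left(\overline{u_\ast w_\ast}\,V_0'(u_\ast w_\ast)-\frac{2(n+2)}{n}V_0(u_\ast w_\ast)\right).$$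
   Context: Here $a_\ast$ plays the role of a (complex) scale-function of space and $w_\ast$ is a weight function built from it; any fixed branch of the power $(\cdot)^{n/2}$ may be used in the definition of $w_\ast$ (only $|w_\ast|^2=|b_0|^2|a_\ast(0)|^n/|a_\ast(t)|^n$ enters the identities beyond the equation itself). The sign $\pm$ is the same throughout each statement. *)

theory Defs
  imports "HOL-Analysis.Analysis"
begin

text \<open>Partial derivative in direction of the j-th coordinate axis of real^'n
  (meaningful when the directional derivative exists).\<close>
definition pdx :: "'n::finite \<Rightarrow> (real^'n \<Rightarrow> complex) \<Rightarrow> real^'n \<Rightarrow> complex" where
  "pdx j f x = vector_derivative (\<lambda>h. f (x + h *\<^sub>R axis j 1)) (at 0)"

definition spatial_div_integral_vanishes :: "('n::finite \<Rightarrow> real^'n \<Rightarrow> complex) \<Rightarrow> bool" where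
  "spatial_div_integral_vanishes F \<longleftrightarrow>
     integrable lborel (\<lambda>x. \<Sum>j\<in>UNIV. pdx j (F j) x) \<and>
     (\<integral>x. (\<Sum>j\<in>UNIV. pdx j (F j) x) \<partial>lborel) = 0"

definition time_diff_under_integral :: "(real \<Rightarrow> real^'n::finite \<Rightarrow> complex) \<Rightarrow> bool" where
  "time_diff_under_integral f \<longleftrightarrow>
     (\<forall>t. integrable lborel (\<lambda>x. vector_derivative (\<lambda>s. f s x) (at t)) \<and>
          ((\<lambda>s. \<integral>x. f s x \<partial>lborel) has_vector_derivative
             (\<integral>x. vector_derivative (\<lambda>s. f s x) (at t) \<partial>lborel)) (at t))"

definition C0 :: "real \<Rightarrow> real \<Rightarrow> real \<Rightarrow> complex" where
  "C0 m hbar \<omega>0 = 2 * of_real m * exp (\<i> * of_real \<omega>0) / of_real hbar"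

text \<open>w_*(t) = b_0 (a_*(0)/a_*(t))^{n/2}, principal branch of the power\<close>
definition wstar :: "nat \<Rightarrow> complex \<Rightarrow> (real \<Rightarrow> complex) \<Rightarrow> real \<Rightarrow> complex" where
  "wstar n b0 a t = b0 * (a 0 / a t) powr (of_nat n / 2)"

definition kfac :: "real \<Rightarrow> real \<Rightarrow> real \<Rightarrow> complex" where
  "kfac \<omega>0 \<theta> \<omega>1 = exp (2 * \<i> * of_real \<omega>0) / exp (2 * \<i> * of_real (\<theta> + \<omega>1))"

end

theory Submission
  imports Defs
begin

lemma ftc_aux0:
  fixes F g :: "real \<Rightarrow> complex" and a b :: real
  assumes d: "\<forall>s. (F has_vector_derivative g s) (at s)"
    and i: "interval_lebesgue_integrable lborel (ereal a) (ereal b) g" and t: "a \<le> b"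
  shows "(LBINT s=ereal a..ereal b. g s) = F b - F a"
proof -
  have si: "set_integrable lborel (einterval a b) g"
    using i t unfolding interval_lebesgue_integrable_def by simp
  have "(LBINT s=a..b. g s) = integral (einterval a b) g"
    using interval_integral_eq_integral'[of "ereal a" "ereal b" g] si t by simp
  also have "\<dots> = integral {a..b} g" using integral_open_interval_real[of a b g]
    by simp
  also have "\<dots> = F b - F a"
    apply (rule integral_unique, rule fundamental_theorem_of_calculus[OF t])
    using d has_vector_derivative_at_within by blast
  finally show ?thesis .
qed

lemma ftc_aux:
  fixes F g :: "real \<Rightarrow> complex" and t :: real
  assumes d: "\<forall>s. (F has_vector_derivative g s) (at s)"
    and i: "interval_lebesgue_integrable lborel 0 (ereal t) g"
  shows "(LBINT s=0..t. g s) = F t - F 0"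
proof (cases "0 \<le> t")
  case True thus ?thesis using ftc_aux0[OF d, of 0 t] i by (simp add: zero_ereal_def)
next
  case False
  have "(LBINT s=0..t. g s) = - (LBINT s=t..0. g s)"
    by (rule interval_integral_endpoints_reverse)
  also have "\<dots> = F t - F 0" using ftc_aux0[OF d, of t 0] i False
    interval_integrable_endpoints_reverse[of 0 "ereal t" g] by (simp add: zero_ereal_def)
  finally show ?thesis .
qed


lemma charge_alg:
  fixes C ut u k L V w :: complex and \<sigma> p g r ww :: real
  assumes eq: "\<sigma> * \<i> * C * ut + k * (of_real (1/p) * L - 1 / w * V) = 0"
    and s: "\<sigma> * \<sigma> = 1" and C: "cnj C = C"
    and R: "cnj u * V / w = of_real (r / ww)"
    and k: "cnj k * k = 1"
  shows "\<sigma> * (C * (ut * cnj u + u * cnj ut)) + 2 * of_real (Im (1/k)) *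
     (of_real (1/p) * of_real g + of_real (1/ww) * of_real r)
   = - 2 * of_real (Im (k * (of_real g + cnj u * L))) / of_real p"
proof -
  define E where "E = of_real (1/p) * L - 1 / w * V"
  define Y where "Y = k * cnj u * E"
  have e1: "C * ut = \<sigma> * \<i> * k * E"
  proof -
    have e0: "\<sigma> * \<i> * C * ut = - (k * E)" using eq unfolding E_def
      by (simp add: add_eq_0_iff)
    have "C * ut = - (of_real (\<sigma>*\<sigma>) * (\<i> * \<i>)) * (C * ut)" using s by simp
    also have "\<dots> = - (\<sigma> * \<i>) * (\<sigma> * \<i> * C * ut)" by (simp add: algebra_simps)
    also have "\<dots> = \<sigma> * \<i> * k * E" unfolding e0 by (simp add: algebra_simps)
    finally show ?thesis .
  qed
  have e2: "C * (ut * cnj u + u * cnj ut) = cnj u * (C * ut) + cnj (cnj u * (C * ut))"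
    using C by (simp add: algebra_simps)
  have e3: "cnj u * (C * ut) = \<sigma> * \<i> * Y" unfolding Y_def e1 by (simp add: algebra_simps)
  have e4: "\<sigma> * (C * (ut * cnj u + u * cnj ut)) = - 2 * of_real (Im Y)"
    unfolding e2 e3 using s by (simp add: complex_eq_iff algebra_simps)
  have Yeq: "Y = k * cnj u * L * of_real (1/p) - k * of_real (r/ww)"
    unfolding Y_def E_def using R by (simp add: algebra_simps)
  have k1: "Im (1/k) = - Im k"
  proof -
    have "k \<noteq> 0" using k by auto
    hence "1/k = cnj k" using k by (simp add: field_simps)
    thus ?thesis by simp
  qed
  have i1: "Im Y = Im (k * cnj u * L) / p - Im k * (r/ww)"
    unfolding Yeq by simp
  have i2: "Im (k * (of_real g + cnj u * L)) = Im k * g + Im (k * cnj u * L)"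
    by (simp add: distrib_left mult.assoc)
  show ?thesis unfolding e4 i1 i2 k1
    by (cases "p = 0") (simp_all add: complex_eq_iff field_simps)
qed


lemma energy_alg:
  fixes c :: real and ut u k L V V0v w A :: complex and \<sigma> p p' n lam :: real
  assumes eq: "\<sigma> * \<i> * of_real c * ut + k * (of_real (1/p) * L - 1 / w * V) = 0"
    and s: "\<sigma> * \<sigma> = 1"
    and R: "Im (cnj (u * w) * V) = 0"
    and k: "cnj k * k = 1" and p: "p > 0" and w: "w \<noteq> 0" and n: "n > 0"
    and lam: "lam = -(n/4) * p' / p"
  shows "(A + cnj A) + of_real ((n+2) * p' / (cmod w)\<^sup>2) * V0v
     + of_real (2 * p / (cmod w)\<^sup>2) * of_real (Re (cnj (ut * w + u * (of_real lam * w)) * V))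
     + ((of_real (\<sigma> * 2) :: complex) * of_real c * of_real (Im (1/k)) * of_real (p * (cmod ut)\<^sup>2)
        + of_real (n / (2 * (cmod w)\<^sup>2) * p') * (cnj (u * w) * V - of_real (2 * (n + 2) / n) * V0v))
   = of_real (2 * Re (A + cnj ut * L))"
proof -
  define W where "W = (cmod w)\<^sup>2"
  define r where "r = Re (cnj (u * w) * V)"
  have W0: "W > 0" using w unfolding W_def by simp
  have Rr: "cnj (u * w) * V = of_real r" using R unfolding r_def by (simp add: complex_eq_iff)
  have k0: "k \<noteq> 0" using k by auto
  have ki: "1/k = cnj k" using k k0 by (simp add: field_simps)
  have Vw: "V / w = of_real (1/p) * L + \<sigma> * \<i> * of_real c * ut * cnj k"
  proof -
    have "k * (V / w) = k * (of_real (1/p) * L) + \<sigma> * \<i> * of_real c * ut"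
      using eq by (simp add: algebra_simps add_eq_0_iff)
    hence "cnj k * (k * (V / w)) = cnj k * (k * (of_real (1/p) * L) + \<sigma> * \<i> * of_real c * ut)"
      by simp
    thus ?thesis using k by (simp add: algebra_simps)
  qed
  have cw: "cnj w * V = of_real W * (V / w)"
    using w unfolding W_def by (simp add: field_simps complex_norm_square[symmetric] mult.commute)
  have re1: "Re (cnj (ut * w + u * (of_real lam * w)) * V) = Re (cnj ut * (cnj w * V)) + lam * r"
    unfolding r_def by (simp add: algebra_simps)
  have re2: "Re (cnj ut * (cnj w * V)) = W * (Re (cnj ut * L) / p - \<sigma> * c * (cmod ut)\<^sup>2 * Im (1/k))"
  proof -
    have "cnj ut * (cnj w * V) = of_real W * (cnj ut * L * of_real (1/p) + \<sigma> * \<i> * of_real c * (cnj ut * ut) * cnj k)"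
      unfolding cw Vw by (simp add: algebra_simps)
    also have "\<dots> = of_real W * (cnj ut * L * of_real (1/p) + \<sigma> * \<i> * of_real (c * (cmod ut)\<^sup>2) * cnj k)"
      by (simp only: of_real_mult complex_norm_square mult.commute) (simp add: ac_simps)
    finally show ?thesis unfolding ki by (simp add: algebra_simps)
  qed
  show ?thesis
    unfolding re1 re2 Rr W_def[symmetric]
    using W0 p n s unfolding lam
    by (simp add: complex_eq_iff field_simps)
qed


lemma a_facts:
  fixes a :: "real \<Rightarrow> complex" and \<theta> :: real
  assumes a_nz: "\<forall>t. a t \<noteq> 0" and a_diff: "\<forall>t. a differentiable (at t)"
    and a_arg: "\<forall>t. Arg (a t) = \<theta>"
  shows "\<exists>r r'. (\<forall>s. r s > 0) \<and> (\<forall>s. cmod (a s) = r s) \<and> (\<forall>s. (r has_real_derivative r' s) (at s))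
     \<and> (\<forall>s. wstar N b0 a s = b0 * of_real ((r 0 / r s) powr (real N / 2)))"
proof -
  define e where "e = cis \<theta>"
  define r where "r s = cmod (a s)" for s
  have ae: "a s = of_real (r s) * e" for s
    using rcis_cmod_Arg[of "a s"] a_arg unfolding r_def e_def rcis_def by simp
  have e1: "e * cnj e = 1" unfolding e_def by (simp add: complex_norm_square[symmetric])
  have e0: "e \<noteq> 0" using e1 by auto
  have re: "r s = Re (a s * cnj e)" for s unfolding ae using e1 by (simp add: mult.assoc)
  define r' where "r' s = Re (vector_derivative a (at s) * cnj e)" for s
  have rd: "(r has_real_derivative r' s) (at s)" for s
  proof -
    have "(a has_vector_derivative vector_derivative a (at s)) (at s)"
      using a_diff vector_derivative_works by blast
    hence "((\<lambda>s. a s * cnj e) has_vector_derivative vector_derivative a (at s) * cnj e) (at s)"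
      by (rule has_vector_derivative_mult_left)
    hence "((\<lambda>s. Re (a s * cnj e)) has_real_derivative r' s) (at s)"
      unfolding r'_def by (rule has_field_derivative_Re)
    thus ?thesis using re by (simp add: fun_eq_iff[symmetric] re[abs_def])
  qed
  have rpos: "r s > 0" for s using a_nz unfolding r_def by simp
  have w: "wstar N b0 a s = b0 * of_real ((r 0 / r s) powr (real N / 2))" for s
  proof -
    have "a 0 / a s = of_real (r 0 / r s)" unfolding ae using e0 by simp
    moreover have "(of_nat N / 2 :: complex) = of_real (real N / 2)" by simp
    ultimately show ?thesis unfolding wstar_def
      using powr_of_real[of "r 0 / r s" "real N / 2"] rpos[of 0] rpos[of s] by simp
  qed
  show ?thesis using rpos rd w unfolding r_def[symmetric] by (intro exI[of _ r] exI[of _ r']) auto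
qed


lemma pdx_prod:
  assumes f: "((\<lambda>h. f (x + h *\<^sub>R axis j 1)) has_vector_derivative f') (at 0)"
    and g: "((\<lambda>h. g (x + h *\<^sub>R axis j 1)) has_vector_derivative g') (at 0)"
  shows "pdx j (\<lambda>x. cnj (f x) * g x) x = cnj f' * g x + cnj (f x) * g'"
proof -
  have "((\<lambda>h. cnj (f (x + h *\<^sub>R axis j 1)) * g (x + h *\<^sub>R axis j 1)) has_vector_derivative
     (cnj (f (x + 0 *\<^sub>R axis j 1)) * g' + cnj f' * g (x + 0 *\<^sub>R axis j 1))) (at 0)"
    by (intro has_vector_derivative_mult has_vector_derivative_cnj f g)
  thus ?thesis unfolding pdx_def by (simp add: vector_derivative_at)
qed

lemma rho_deriv:
  fixes r :: "real \<Rightarrow> real"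
  assumes rpos: "\<forall>s. r s > 0" and rd: "(r has_real_derivative r') (at t)"
  shows "((\<lambda>s. (r 0 / r s) powr (N / 2)) has_real_derivative
          (- (N/2) * r' / r t) * (r 0 / r t) powr (N / 2)) (at t)"
proof -
  have g: "((\<lambda>s. r 0 / r s) has_real_derivative - (r 0 * r') / (r t * r t)) (at t)"
    using rpos[rule_format, of t] rd by (auto intro!: derivative_eq_intros simp: power2_eq_square)
  have "((\<lambda>s. (r 0 / r s) powr (N / 2)) has_real_derivative
     (r 0 / r t) powr (N/2) * (0 * ln (r 0 / r t) + - (r 0 * r') / (r t * r t) * (N/2) / (r 0 / r t))) (at t)"
    by (rule DERIV_powr[OF g]) (use rpos in auto)
  thus ?thesis using rpos[rule_format, of t] rpos[rule_format, of 0]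
    by (simp add: field_simps)
qed

lemma w_deriv:
  fixes r :: "real \<Rightarrow> real" and w :: "real \<Rightarrow> complex"
  assumes rpos: "\<forall>s. r s > 0" and rd: "(r has_real_derivative r') (at t)"
    and w: "\<forall>s. w s = b0 * of_real ((r 0 / r s) powr (N / 2))"
  shows "(w has_vector_derivative of_real (- (N/2) * r' / r t) * w t) (at t)"
proof -
  have "((\<lambda>s. b0 * of_real ((r 0 / r s) powr (N / 2))) has_vector_derivative
     b0 * of_real ((- (N/2) * r' / r t) * (r 0 / r t) powr (N / 2))) (at t)"
    by (intro has_vector_derivative_mult_right has_vector_derivative_of_real rho_deriv rpos rd)
  moreover have "w = (\<lambda>s. b0 * of_real ((r 0 / r s) powr (N / 2)))" using w by auto
  ultimately show ?thesis using w by (simp add: algebra_simps)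
qed

lemma Q_deriv:
  fixes r :: "real \<Rightarrow> real" and w :: "real \<Rightarrow> complex"
  assumes rpos: "\<forall>s. r s > 0" and rd: "(r has_real_derivative r') (at t)"
    and w: "\<forall>s. w s = b0 * of_real ((r 0 / r s) powr (N / 2))" and b0: "b0 \<noteq> 0"
  shows "((\<lambda>s. 2 * (r s)\<^sup>2 / (cmod (w s))\<^sup>2) has_real_derivative
          (N + 2) * (2 * r t * r') / (cmod (w t))\<^sup>2) (at t)"
proof -
  define \<rho> where "\<rho> s = (r 0 / r s) powr (N / 2)" for s
  have \<rho>pos: "\<rho> s > 0" for s unfolding \<rho>_def using rpos[rule_format, of 0] rpos[rule_format, of s] by simp
  have cw: "(cmod (w s))\<^sup>2 = (cmod b0)\<^sup>2 * (\<rho> s)\<^sup>2" for s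
    using w \<rho>pos[of s] unfolding \<rho>_def by (simp add: norm_mult power_mult_distrib)
  have rd2: "(\<rho> has_real_derivative (- (N/2) * r' / r t) * \<rho> t) (at t)"
    unfolding \<rho>_def[abs_def] by (rule rho_deriv[OF rpos rd])
  have "((\<lambda>s. 2 * (r s)\<^sup>2 / ((cmod b0)\<^sup>2 * (\<rho> s)\<^sup>2)) has_real_derivative
      (2 * (2 * r t * r') * ((cmod b0)\<^sup>2 * (\<rho> t)\<^sup>2) - 2 * (r t)\<^sup>2 * ((cmod b0)\<^sup>2 * (2 * \<rho> t * ((- (N/2) * r' / r t) * \<rho> t))))
        / ((cmod b0)\<^sup>2 * (\<rho> t)\<^sup>2)\<^sup>2) (at t)"
    using b0 \<rho>pos[of t]
    by (auto intro!: derivative_eq_intros rd rd2 simp: power2_eq_square)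
  thus ?thesis unfolding cw apply (rule DERIV_cong) using b0 \<rho>pos[of t] rpos[rule_format, of t]
    by (simp add: field_simps power2_eq_square)
qed

lemma solve_sigma:
  fixes z e X :: complex and \<sigma> :: real
  assumes "\<sigma> * \<sigma> = 1" "of_real \<sigma> * z + e = X"
  shows "z = of_real \<sigma> * (X - e)"
proof -
  have "z = of_real (\<sigma> * \<sigma>) * z" using assms(1) by simp
  also have "\<dots> = of_real \<sigma> * (of_real \<sigma> * z + e - e)" by (simp add: algebra_simps)
  finally show ?thesis using assms(2) by simp
qed

theorem lemma6p2:
  fixes m hbar \<omega>0 \<omega>1 \<theta> \<sigma> :: real
    and a :: "real \<Rightarrow> complex" and b0 :: complex
    and V0 V0' :: "complex \<Rightarrow> complex"
    and u ut :: "real \<Rightarrow> real^'n::finite \<Rightarrow> complex"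
    and ux uxx :: "'n \<Rightarrow> real \<Rightarrow> real^'n \<Rightarrow> complex"
    and eC0 eCn eE0 eEn :: "real \<Rightarrow> real^'n \<Rightarrow> complex"
  assumes hbar: "hbar \<noteq> 0"
    and om0: "-(pi/2) < \<omega>0" "\<omega>0 \<le> pi/2"
    and om1: "-(pi/2) < \<omega>1" "\<omega>1 \<le> pi/2"
    and sign: "\<sigma> = 1 \<or> \<sigma> = -1"
    and a_nz: "\<forall>t. a t \<noteq> 0"
    and a_diff: "\<forall>t. a differentiable (at t)"
    and a_arg: "\<forall>t. Arg (a t) = \<theta>"
    and b0: "b0 \<noteq> 0"
    and C0_real: "C0 m hbar \<omega>0 \<in> \<real>"
    and V0': "\<forall>z. Im (cnj z * V0' z) = 0"
    \<comment> \<open>smoothness: derivatives of u\<close>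
    and ut: "\<forall>t x. ((\<lambda>s. u s x) has_vector_derivative ut t x) (at t)"
    and ux: "\<forall>j t x. ((\<lambda>h. u t (x + h *\<^sub>R axis j 1)) has_vector_derivative ux j t x) (at 0)"
    and uxx: "\<forall>j t x. ((\<lambda>h. ux j t (x + h *\<^sub>R axis j 1)) has_vector_derivative uxx j t x) (at 0)"
    \<comment> \<open>the equation\<close>
    and eq: "\<forall>t x. \<sigma> * \<i> * C0 m hbar \<omega>0 * ut t x
               + kfac \<omega>0 \<theta> \<omega>1 * (of_real (1 / (cmod (a t))\<^sup>2) * (\<Sum>j\<in>UNIV. uxx j t x)
                  - 1 / wstar CARD('n) b0 a t * V0' (u t x * wstar CARD('n) b0 a t)) = 0"
    \<comment> \<open>charge densities\<close>
    and eC0_def: "\<forall>t x. eC0 t x = C0 m hbar \<omega>0 * of_real ((cmod (u t x))\<^sup>2)"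
    and eCn_def: "\<forall>t x. eCn t x = 2 * of_real (Im (1 / kfac \<omega>0 \<theta> \<omega>1)) *
               (of_real (1 / (cmod (a t))\<^sup>2) * (\<Sum>j\<in>UNIV. of_real ((cmod (ux j t x))\<^sup>2))
                + of_real (1 / (cmod (wstar CARD('n) b0 a t))\<^sup>2)
                  * cnj (u t x * wstar CARD('n) b0 a t) * V0' (u t x * wstar CARD('n) b0 a t))"
    \<comment> \<open>regularity / decay for the charge identity\<close>
    and C_int: "\<forall>t. integrable lborel (eC0 t) \<and> integrable lborel (eCn t)"
    and C_int_time: "\<forall>t::real. interval_lebesgue_integrable lborel 0 (ereal t) (\<lambda>s. \<integral>x. eCn s x \<partial>lborel)"
    and C_div: "\<forall>t. spatial_div_integral_vanishes (\<lambda>j x. cnj (u t x) * ux j t x)"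
    and C_dt: "time_diff_under_integral eC0"
  shows "(\<forall>t. \<sigma> * (\<integral>x. eC0 t x \<partial>lborel) + (LBINT s=0..t. (\<integral>x. eCn s x \<partial>lborel))
              = \<sigma> * (\<integral>x. eC0 0 x \<partial>lborel))
    \<and> (\<forall>utx :: 'n \<Rightarrow> real \<Rightarrow> real^'n \<Rightarrow> complex.
        \<comment> \<open>additional assumption on V0 for the energy estimate\<close>
        (\<forall>(\<psi>::real \<Rightarrow> complex) \<psi>' t. (\<psi> has_vector_derivative \<psi>') (at t) \<longrightarrow>
            ((\<lambda>s. V0 (\<psi> s)) has_vector_derivative of_real (Re (cnj \<psi>' * V0' (\<psi> t)))) (at t))
        \<comment> \<open>energy densities\<close>
      \<longrightarrow> (\<forall>t x. eE0 t x = (\<Sum>j\<in>UNIV. of_real ((cmod (ux j t x))\<^sup>2))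
               + of_real (2 * (cmod (a t))\<^sup>2 / (cmod (wstar CARD('n) b0 a t))\<^sup>2)
                 * V0 (u t x * wstar CARD('n) b0 a t))
      \<longrightarrow> (\<forall>t x. eEn t x = \<sigma> * 2 * C0 m hbar \<omega>0 * of_real (Im (1 / kfac \<omega>0 \<theta> \<omega>1))
                 * of_real ((cmod (a t))\<^sup>2 * (cmod (ut t x))\<^sup>2)
               + of_real (real CARD('n) / (2 * (cmod (wstar CARD('n) b0 a t))\<^sup>2)
                   * deriv (\<lambda>s. (cmod (a s))\<^sup>2) t)
                 * (cnj (u t x * wstar CARD('n) b0 a t) * V0' (u t x * wstar CARD('n) b0 a t)
                    - of_real (2 * (real CARD('n) + 2) / real CARD('n))
                      * V0 (u t x * wstar CARD('n) b0 a t)))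
        \<comment> \<open>smoothness: mixed derivatives d_t d_j u = d_j d_t u\<close>
      \<longrightarrow> (\<forall>j t x. ((\<lambda>s. ux j s x) has_vector_derivative utx j t x) (at t)
               \<and> ((\<lambda>h. ut t (x + h *\<^sub>R axis j 1)) has_vector_derivative utx j t x) (at 0))
        \<comment> \<open>regularity / decay for the energy identity\<close>
      \<longrightarrow> (\<forall>t. integrable lborel (eE0 t) \<and> integrable lborel (eEn t))
      \<longrightarrow> (\<forall>t::real. interval_lebesgue_integrable lborel 0 (ereal t) (\<lambda>s. \<integral>x. eEn s x \<partial>lborel))
      \<longrightarrow> (\<forall>t. spatial_div_integral_vanishes (\<lambda>j x. cnj (ut t x) * ux j t x))
      \<longrightarrow> time_diff_under_integral eE0
      \<longrightarrow> (\<forall>t. (\<integral>x. eE0 t x \<partial>lborel) + (LBINT s=0..t. (\<integral>x. eEn s x \<partial>lborel))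
              = (\<integral>x. eE0 0 x \<partial>lborel)))"
proof -
  obtain r r' where rpos: "\<forall>s. r s > 0" and ra: "\<forall>s. cmod (a s) = r s"
    and rd: "\<forall>s. (r has_real_derivative r' s) (at s)"
    and wr: "\<forall>s. wstar CARD('n) b0 a s = b0 * of_real ((r 0 / r s) powr (real CARD('n) / 2))"
    using a_facts[OF a_nz a_diff a_arg, of "CARD('n)" b0] by blast
  define k where "k = kfac \<omega>0 \<theta> \<omega>1"
  have kk: "cnj k * k = 1"
  proof -
    have "cmod k = 1" unfolding k_def kfac_def by (simp add: norm_divide)
    hence "k * cnj k = 1" using complex_norm_square[of k] by simp
    thus ?thesis by (simp add: mult.commute)
  qed
  obtain c where c: "C0 m hbar \<omega>0 = of_real c" using C0_real Reals_cases by blast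
  define w where "w = wstar CARD('n) b0 a"
  have w0: "w s \<noteq> 0" for s unfolding w_def using wr b0 rpos[rule_format, of s] rpos[rule_format, of 0] by simp
  have ss: "\<sigma> * \<sigma> = 1" using sign by auto
  have Rr: "cnj (u t x * w t) * V0' (u t x * w t) = of_real (Re (cnj (u t x * w t) * V0' (u t x * w t)))" for t x
    using V0'[rule_format, of "u t x * w t"] by (simp only: complex_is_Real_iff[symmetric] of_real_Re)
  have part1: "\<forall>t. \<sigma> * (\<integral>x. eC0 t x \<partial>lborel) + (LBINT s=0..t. (\<integral>x. eCn s x \<partial>lborel))
              = \<sigma> * (\<integral>x. eC0 0 x \<partial>lborel)"
  proof
    fix t0 :: real
    define vd where "vd t x = C0 m hbar \<omega>0 * (ut t x * cnj (u t x) + u t x * cnj (ut t x))" for t x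
    define Dv where "Dv t x = (\<Sum>j\<in>UNIV. pdx j (\<lambda>x. cnj (u t x) * ux j t x) x)" for t x
    have hvd: "vector_derivative (\<lambda>s. eC0 s x) (at t) = vd t x" for t x
    proof -
      have e: "(\<lambda>s. eC0 s x) = (\<lambda>s. C0 m hbar \<omega>0 * (u s x * cnj (u s x)))"
        using eC0_def by (simp add: complex_norm_square[symmetric] fun_eq_iff)
      have "((\<lambda>s. C0 m hbar \<omega>0 * (u s x * cnj (u s x))) has_vector_derivative vd t x) (at t)"
        unfolding vd_def using ut
        by (auto intro!: derivative_eq_intros simp: algebra_simps)
      thus ?thesis unfolding e by (rule vector_derivative_at)
    qed
    have Dv: "Dv t x = of_real (\<Sum>j\<in>UNIV. (cmod (ux j t x))\<^sup>2) + cnj (u t x) * (\<Sum>j\<in>UNIV. uxx j t x)" for t x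
    proof -
      have "Dv t x = (\<Sum>j\<in>UNIV. cnj (ux j t x) * ux j t x + cnj (u t x) * uxx j t x)"
        unfolding Dv_def using ux uxx by (intro sum.cong refl pdx_prod) auto
      also have "\<dots> = (\<Sum>j\<in>UNIV. of_real ((cmod (ux j t x))\<^sup>2)) + cnj (u t x) * (\<Sum>j\<in>UNIV. uxx j t x)"
        by (simp add: sum.distrib sum_distrib_left complex_norm_square[symmetric] mult.commute)
      finally show ?thesis by simp
    qed
    have pw: "\<sigma> * vd t x + eCn t x = - 2 * of_real (Im (k * Dv t x)) / of_real ((cmod (a t))\<^sup>2)" for t x
    proof -
      have R: "cnj (u t x) * V0' (u t x * w t) / w t
          = of_real (Re (cnj (u t x * w t) * V0' (u t x * w t)) / (cmod (w t))\<^sup>2)"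
      proof -
        have "cnj (u t x) * V0' (u t x * w t) / w t = cnj (u t x * w t) * V0' (u t x * w t) / (w t * cnj (w t))"
          using w0[of t] by (simp add: field_simps)
        also have "\<dots> = of_real (Re (cnj (u t x * w t) * V0' (u t x * w t))) / of_real ((cmod (w t))\<^sup>2)"
          by (subst Rr) (simp only: complex_norm_square)
        finally show ?thesis by simp
      qed
      have eq1: "\<sigma> * \<i> * C0 m hbar \<omega>0 * ut t x + k * (of_real (1 / (cmod (a t))\<^sup>2) * (\<Sum>j\<in>UNIV. uxx j t x)
               - 1 / w t * V0' (u t x * w t)) = 0"
        using eq unfolding k_def w_def by blast
      have eCnx: "eCn t x = 2 * of_real (Im (1 / k)) *
               (of_real (1 / (cmod (a t))\<^sup>2) * of_real (\<Sum>j\<in>UNIV. (cmod (ux j t x))\<^sup>2)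
                + of_real (1 / (cmod (w t))\<^sup>2) * of_real (Re (cnj (u t x * w t) * V0' (u t x * w t))))"
      proof -
        define rr where "rr = Re (cnj (u t x * w t) * V0' (u t x * w t))"
        have Rr': "cnj (u t x * w t) * V0' (u t x * w t) = of_real rr" using Rr unfolding rr_def by simp
        have "eCn t x = 2 * of_real (Im (1 / k)) *
               (of_real (1 / (cmod (a t))\<^sup>2) * (\<Sum>j\<in>UNIV. of_real ((cmod (ux j t x))\<^sup>2))
                + of_real (1 / (cmod (w t))\<^sup>2) * (cnj (u t x * w t) * V0' (u t x * w t)))"
          using eCn_def[rule_format, of t x] unfolding k_def w_def[symmetric] by (simp only: mult.assoc)
        thus ?thesis unfolding Rr' rr_def[symmetric] by (simp only: of_real_sum Re_complex_of_real)
      qed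
      have Cc: "cnj (C0 m hbar \<omega>0) = C0 m hbar \<omega>0" using c by simp
      show ?thesis unfolding vd_def Dv eCnx
        by (rule charge_alg[OF eq1 ss Cc R kk])
    qed
    have vdint: "(\<integral>x. vd t x \<partial>lborel) = - \<sigma> * (\<integral>x. eCn t x \<partial>lborel)" for t
    proof -
      have iD: "integrable lborel (Dv t)" and iD0: "(\<integral>x. Dv t x \<partial>lborel) = 0"
        using C_div[rule_format, of t] unfolding spatial_div_integral_vanishes_def Dv_def[abs_def] by auto
      have iC: "integrable lborel (eCn t)" using C_int by blast
      have f: "(\<lambda>x. vd t x) = (\<lambda>x. \<sigma> * (- 2 * of_real (Im (k * Dv t x)) / of_real ((cmod (a t))\<^sup>2) - eCn t x))"
        using solve_sigma[OF ss pw] by blast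
      have "(\<integral>x. vd t x \<partial>lborel) = \<sigma> * (- 2 * of_real (Im (k * (\<integral>x. Dv t x \<partial>lborel))) / of_real ((cmod (a t))\<^sup>2) - (\<integral>x. eCn t x \<partial>lborel))"
        unfolding f using iD iC by (simp add: integrable_mult_right)
      thus ?thesis using iD0 by simp
    qed
    have Fd: "((\<lambda>s. - (\<sigma> * (\<integral>x. eC0 s x \<partial>lborel))) has_vector_derivative (\<integral>x. eCn s x \<partial>lborel)) (at s)" for s
    proof -
      have "((\<lambda>s. \<integral>x. eC0 s x \<partial>lborel) has_vector_derivative (\<integral>x. vd s x \<partial>lborel)) (at s)"
        using C_dt unfolding time_diff_under_integral_def hvd by blast
      hence "((\<lambda>s. - (\<sigma> * (\<integral>x. eC0 s x \<partial>lborel))) has_vector_derivative - (\<sigma> * (\<integral>x. vd s x \<partial>lborel))) (at s)"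
        by (intro derivative_intros)
      thus ?thesis unfolding vdint using ss by (simp add: mult.assoc[symmetric] flip: of_real_mult)
    qed
    have "(LBINT s=0..t0. (\<integral>x. eCn s x \<partial>lborel)) = - (\<sigma> * (\<integral>x. eC0 t0 x \<partial>lborel)) - - (\<sigma> * (\<integral>x. eC0 0 x \<partial>lborel))"
      by (rule ftc_aux[OF allI[OF Fd]]) (use C_int_time in blast)
    thus "\<sigma> * (\<integral>x. eC0 t0 x \<partial>lborel) + (LBINT s=0..t0. (\<integral>x. eCn s x \<partial>lborel)) = \<sigma> * (\<integral>x. eC0 0 x \<partial>lborel)"
      by simp
  qed
  show ?thesis
  proof (rule conjI[OF part1], rule allI, intro impI)
    fix utx :: "'n \<Rightarrow> real \<Rightarrow> real^'n \<Rightarrow> complex"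
    assume HV: "\<forall>(\<psi>::real \<Rightarrow> complex) \<psi>' t. (\<psi> has_vector_derivative \<psi>') (at t) \<longrightarrow>
            ((\<lambda>s. V0 (\<psi> s)) has_vector_derivative of_real (Re (cnj \<psi>' * V0' (\<psi> t)))) (at t)"
      and eE0d: "\<forall>t x. eE0 t x = (\<Sum>j\<in>UNIV. of_real ((cmod (ux j t x))\<^sup>2))
               + of_real (2 * (cmod (a t))\<^sup>2 / (cmod (wstar CARD('n) b0 a t))\<^sup>2)
                 * V0 (u t x * wstar CARD('n) b0 a t)"
      and eEnd: "\<forall>t x. eEn t x = \<sigma> * 2 * C0 m hbar \<omega>0 * of_real (Im (1 / kfac \<omega>0 \<theta> \<omega>1))
                 * of_real ((cmod (a t))\<^sup>2 * (cmod (ut t x))\<^sup>2)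
               + of_real (real CARD('n) / (2 * (cmod (wstar CARD('n) b0 a t))\<^sup>2)
                   * deriv (\<lambda>s. (cmod (a s))\<^sup>2) t)
                 * (cnj (u t x * wstar CARD('n) b0 a t) * V0' (u t x * wstar CARD('n) b0 a t)
                    - of_real (2 * (real CARD('n) + 2) / real CARD('n))
                      * V0 (u t x * wstar CARD('n) b0 a t))"
      and hutx: "\<forall>j t x. ((\<lambda>s. ux j s x) has_vector_derivative utx j t x) (at t)
               \<and> ((\<lambda>h. ut t (x + h *\<^sub>R axis j 1)) has_vector_derivative utx j t x) (at 0)"
      and E_int: "\<forall>t. integrable lborel (eE0 t) \<and> integrable lborel (eEn t)"
      and E_int_time: "\<forall>t::real. interval_lebesgue_integrable lborel 0 (ereal t) (\<lambda>s. \<integral>x. eEn s x \<partial>lborel)"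
      and E_div: "\<forall>t. spatial_div_integral_vanishes (\<lambda>j x. cnj (ut t x) * ux j t x)"
      and E_dt: "time_diff_under_integral eE0"
    define lam where "lam t = - (real CARD('n) / 2) * r' t / r t" for t
    define Q' where "Q' t = (real CARD('n) + 2) * (2 * r t * r' t) / (cmod (w t))\<^sup>2" for t
    define A where "A t x = (\<Sum>j\<in>UNIV. cnj (utx j t x) * ux j t x)" for t x
    define L where "L t x = (\<Sum>j\<in>UNIV. uxx j t x)" for t x
    define vdE where "vdE t x = (A t x + cnj (A t x)) + of_real (Q' t) * V0 (u t x * w t)
       + of_real (2 * (cmod (a t))\<^sup>2 / (cmod (w t))\<^sup>2)
         * of_real (Re (cnj (ut t x * w t + u t x * (of_real (lam t) * w t)) * V0' (u t x * w t)))" for t x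
    define Dv where "Dv t x = (\<Sum>j\<in>UNIV. pdx j (\<lambda>x. cnj (ut t x) * ux j t x) x)" for t x
    have wr': "\<forall>s. w s = b0 * of_real ((r 0 / r s) powr (real CARD('n) / 2))" using wr unfolding w_def by blast
    have wd: "(w has_vector_derivative of_real (lam t) * w t) (at t)" for t
      unfolding lam_def using w_deriv[OF rpos rd[rule_format, of t] wr'] by simp
    have Qd: "((\<lambda>s. 2 * (cmod (a s))\<^sup>2 / (cmod (w s))\<^sup>2) has_real_derivative Q' t) (at t)" for t
      unfolding Q'_def ra[rule_format] using Q_deriv[OF rpos rd[rule_format, of t] wr' b0] by simp
    have dP: "deriv (\<lambda>s. (cmod (a s))\<^sup>2) t = 2 * r t * r' t" for t
    proof -
      have "((\<lambda>s. (r s)\<^sup>2) has_real_derivative 2 * r t * r' t) (at t)"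
        using rd by (auto intro!: derivative_eq_intros)
      thus ?thesis unfolding ra[rule_format] by (rule DERIV_imp_deriv)
    qed
    have hvdE: "vector_derivative (\<lambda>s. eE0 s x) (at t) = vdE t x" for t x
    proof -
      have e: "(\<lambda>s. eE0 s x) = (\<lambda>s. (\<Sum>j\<in>UNIV. ux j s x * cnj (ux j s x))
          + of_real (2 * (cmod (a s))\<^sup>2 / (cmod (w s))\<^sup>2) * V0 (u s x * w s))"
        using eE0d unfolding w_def by (simp add: complex_norm_square[symmetric] fun_eq_iff)
      have psi: "((\<lambda>s. u s x * w s) has_vector_derivative ut t x * w t + u t x * (of_real (lam t) * w t)) (at t)"
        using has_vector_derivative_mult[OF ut[rule_format, of x t] wd[of t]] by (simp add: add.commute)
      have V0d: "((\<lambda>s. V0 (u s x * w s)) has_vector_derivative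
          of_real (Re (cnj (ut t x * w t + u t x * (of_real (lam t) * w t)) * V0' (u t x * w t)))) (at t)"
        using HV psi by blast
      have S: "((\<lambda>s. \<Sum>j\<in>UNIV. ux j s x * cnj (ux j s x)) has_vector_derivative
           (\<Sum>j\<in>UNIV. ux j t x * cnj (utx j t x) + utx j t x * cnj (ux j t x))) (at t)"
        using hutx by (intro has_vector_derivative_sum has_vector_derivative_mult has_vector_derivative_cnj) auto
      have M: "((\<lambda>s. of_real (2 * (cmod (a s))\<^sup>2 / (cmod (w s))\<^sup>2) * V0 (u s x * w s)) has_vector_derivative
          of_real (2 * (cmod (a t))\<^sup>2 / (cmod (w t))\<^sup>2) * of_real (Re (cnj (ut t x * w t + u t x * (of_real (lam t) * w t)) * V0' (u t x * w t)))
          + of_real (Q' t) * V0 (u t x * w t)) (at t)"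
        by (intro has_vector_derivative_mult has_vector_derivative_of_real Qd V0d)
      have Seq: "(\<Sum>j\<in>UNIV. ux j t x * cnj (utx j t x) + utx j t x * cnj (ux j t x)) = A t x + cnj (A t x)"
        unfolding A_def by (simp add: sum.distrib mult.commute)
      have "((\<lambda>s. eE0 s x) has_vector_derivative vdE t x) (at t)"
        unfolding e vdE_def using has_vector_derivative_add[OF S M] unfolding Seq by (simp add: algebra_simps)
      thus ?thesis by (rule vector_derivative_at)
    qed
    have DvE: "Dv t x = A t x + cnj (ut t x) * L t x" for t x
    proof -
      have "Dv t x = (\<Sum>j\<in>UNIV. cnj (utx j t x) * ux j t x + cnj (ut t x) * uxx j t x)"
        unfolding Dv_def using hutx ux uxx by (intro sum.cong refl pdx_prod) auto
      thus ?thesis unfolding A_def L_def by (simp add: sum.distrib sum_distrib_left)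
    qed
    have pwE: "vdE t x + eEn t x = of_real (2 * Re (Dv t x))" for t x
    proof -
      have eq1: "\<sigma> * \<i> * of_real c * ut t x + k * (of_real (1 / (cmod (a t))\<^sup>2) * L t x
               - 1 / w t * V0' (u t x * w t)) = 0"
        using eq c unfolding k_def w_def L_def by metis
      have R: "Im (cnj (u t x * w t) * V0' (u t x * w t)) = 0" using V0' by blast
      have p: "(cmod (a t))\<^sup>2 > 0" using a_nz by simp
      have n: "real CARD('n) > 0" by simp
      have lamE: "lam t = - (real CARD('n) / 4) * (2 * r t * r' t) / (cmod (a t))\<^sup>2"
        unfolding lam_def ra[rule_format] using rpos[rule_format, of t] by (simp add: field_simps power2_eq_square)
      have eEnx: "eEn t x = (of_real (\<sigma> * 2) :: complex) * of_real c * of_real (Im (1 / k))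
                 * of_real ((cmod (a t))\<^sup>2 * (cmod (ut t x))\<^sup>2)
               + of_real (real CARD('n) / (2 * (cmod (w t))\<^sup>2) * (2 * r t * r' t))
                 * (cnj (u t x * w t) * V0' (u t x * w t)
                    - of_real (2 * (real CARD('n) + 2) / real CARD('n)) * V0 (u t x * w t))"
        using eEnd[rule_format, of t x] unfolding c k_def w_def[symmetric] dP .
      show ?thesis unfolding vdE_def eEnx Q'_def DvE
        by (rule energy_alg[OF eq1 ss R kk p w0 n lamE])
    qed
    have vdEint: "(\<integral>x. vdE t x \<partial>lborel) = - (\<integral>x. eEn t x \<partial>lborel)" for t
    proof -
      have iD: "integrable lborel (Dv t)" and iD0: "(\<integral>x. Dv t x \<partial>lborel) = 0"
        using E_div[rule_format, of t] unfolding spatial_div_integral_vanishes_def Dv_def[abs_def] by auto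
      have iE: "integrable lborel (eEn t)" using E_int by blast
      have f: "(\<lambda>x. vdE t x) = (\<lambda>x. of_real (2 * Re (Dv t x)) - eEn t x)"
        using pwE by (auto simp: fun_eq_iff algebra_simps)
      have "(\<integral>x. vdE t x \<partial>lborel) = of_real (2 * Re (\<integral>x. Dv t x \<partial>lborel)) - (\<integral>x. eEn t x \<partial>lborel)"
        unfolding f using iD iE by simp
      thus ?thesis using iD0 by simp
    qed
    have Fd: "((\<lambda>s. - (\<integral>x. eE0 s x \<partial>lborel)) has_vector_derivative (\<integral>x. eEn s x \<partial>lborel)) (at s)" for s
    proof -
      have "((\<lambda>s. \<integral>x. eE0 s x \<partial>lborel) has_vector_derivative (\<integral>x. vdE s x \<partial>lborel)) (at s)"
        using E_dt unfolding time_diff_under_integral_def hvdE by blast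
      hence "((\<lambda>s. - (\<integral>x. eE0 s x \<partial>lborel)) has_vector_derivative - (\<integral>x. vdE s x \<partial>lborel)) (at s)"
        by (intro derivative_intros)
      thus ?thesis unfolding vdEint by simp
    qed
    show "\<forall>t. (\<integral>x. eE0 t x \<partial>lborel) + (LBINT s=0..t. (\<integral>x. eEn s x \<partial>lborel))
              = (\<integral>x. eE0 0 x \<partial>lborel)"
    proof
      fix t0 :: real
      have "(LBINT s=0..t0. (\<integral>x. eEn s x \<partial>lborel)) = - (\<integral>x. eE0 t0 x \<partial>lborel) - - (\<integral>x. eE0 0 x \<partial>lborel)"
        by (rule ftc_aux[OF allI[OF Fd]]) (use E_int_time in blast)
      thus "(\<integral>x. eE0 t0 x \<partial>lborel) + (LBINT s=0..t0. (\<integral>x. eEn s x \<partial>lborel)) = (\<integral>x. eE0 0 x \<partial>lborel)"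
        by simp
    qed
  qed
qed

end
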